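(* Let $\mathcal{A}:\mathbb{R}^{n_1\times n_2}\to\mathbb{R}^m$ be linear, $R\ge1$, $\alpha,\beta>0$, $\hat X=\sum_{r=1}^R\hat u^r(\hat v^r)^T$ with $\hat u^r\in\mathbb{R}^{n_1}$, $\hat v^r\in\mathbb{R}^{n_2}$, $\eta\in\mathbb{R}^m$ and $y=\mathcal{A}(\hat X)+\eta$. Let $(u^1_{\alpha,\beta},\dots,v^R_{\alpha,\beta})$ be a global minimizer of $J^R_{\alpha,\beta}$ and $X_{\alpha,\beta}=\sum_{r=1}^R u^r_{\alpha,\beta}(v^r_{\alpha,\beta})^T$. If $\|y-\mathcal{A}(X_{\alpha,\beta})\|_2\ge\|\eta\|_2$, then $$\sum_{r=1}^R\|u^r_{\alpha,\beta}\|_2^2\le C_{2,1}\sqrt[3]{\beta^2/\alpha^2}\sum_{r=1}^R(\|\hat u^r\|_2\|\hat v^r\|_1)^{2/3},\qquad \sum_{r=1}^R\|v^r_{\alpha,\beta}\|_1\le C_{2,1}\sqrt[3]{\alpha/\beta}\sum_{r=1}^R(\|\hat u^r\|_2\|\hat v^r\|_1)^{2/3},$$ and $$\sum_{r=1}^R(\|u^r_{\alpha,\beta}\|_2\|v^r_{\alpha,\beta}\|_1)^{2/3}\le\sum_{r=1}^R(\|\hat u^r\|_2\|\hat v^r\|_1)^{2/3}.$$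
   Context: For $y\in\mathbb{R}^m$ and $\alpha,\beta>0$, the functional $J^R_{\alpha,\beta}:(\mathbb{R}^{n_1})^R\times(\mathbb{R}^{n_2})^R\to\mathbb{R}$ is $$J^R_{\alpha,\beta}(u^1,\dots,u^R,v^1,\dots,v^R)=\Big\|y-\mathcal{A}\Big(\sum_{r=1}^Ru^r(v^r)^T\Big)\Big\|_2^2+\alpha\sum_{r=1}^R\|u^r\|_2^2+\beta\sum_{r=1}^R\|v^r\|_1.$$ The constant is $C_{2,1}=(1/2)^{2/3}+2^{1/3}$. *)

theory Defs
  imports "HOL-Analysis.Analysis"
begin

definition outer :: "real^'n1 \<Rightarrow> real^'n2 \<Rightarrow> real^'n2^'n1" where
  "outer u v = (\<chi> i j. u $ i * v $ j)"

definition l1norm :: "real^'n \<Rightarrow> real" where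
  "l1norm v = (\<Sum>j\<in>UNIV. \<bar>v $ j\<bar>)"

definition J :: "(real^'n2^'n1 \<Rightarrow> real^'m) \<Rightarrow> real^'m \<Rightarrow> real \<Rightarrow> real \<Rightarrow> nat
     \<Rightarrow> (nat \<Rightarrow> real^'n1) \<Rightarrow> (nat \<Rightarrow> real^'n2) \<Rightarrow> real" where
  "J A y \<alpha> \<beta> R u v =
     (norm (y - A (\<Sum>r<R. outer (u r) (v r))))\<^sup>2
     + \<alpha> * (\<Sum>r<R. (norm (u r))\<^sup>2) + \<beta> * (\<Sum>r<R. l1norm (v r))"

definition C21 :: real where
  "C21 = (1/2) powr (2/3) + 2 powr (1/3)"

end

theory Submission
  imports Defs
begin

lemma cube: "(x::real) \<ge> 0 \<Longrightarrow> (x powr (1/3))^3 = x"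
proof -
  assume "x\<ge>0"
  have "(x powr (1/3))^3 = x powr (1/3) * x powr (1/3) * x powr (1/3)" by (simp add: power3_eq_cube)
  also have "\<dots> = x powr (1/3+1/3+1/3)" by (simp only: powr_add)
  also have "(1/3+1/3+1/3::real) = 1" by simp
  also have "x powr 1 = x" using \<open>x\<ge>0\<close> by simp
  finally show ?thesis .
qed

lemma sq: "(x::real) \<ge> 0 \<Longrightarrow> (x powr (1/3))^2 = x powr (2/3)"
proof -
  assume "x\<ge>0"
  have "(x powr (1/3))^2 = x powr (1/3) * x powr (1/3)" by (simp add: power2_eq_square)
  also have "\<dots> = x powr (1/3+1/3)" by (simp only: powr_add)
  also have "(1/3+1/3::real) = 2/3" by simp
  finally show ?thesis .
qed

lemma amgm: "(x::real) \<ge> 0 \<Longrightarrow> z \<ge> 0 \<Longrightarrow> 3*x*z^2 \<le> x^3 + 2*z^3"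
proof -
  assume "x\<ge>0" "z\<ge>0"
  have "x^3 + 2*z^3 - 3*x*z^2 = (x-z)^2*(x+2*z)" by (simp add: algebra_simps power2_eq_square power3_eq_cube)
  moreover have "(x-z)^2*(x+2*z) \<ge> 0" using \<open>x\<ge>0\<close> \<open>z\<ge>0\<close> by simp
  ultimately show ?thesis by linarith
qed

lemma C21_eq: "C21 * 2 powr (2/3) = 3"
proof -
  have "C21 * 2 powr (2/3) = ((1/2) * 2) powr (2/3) + 2 powr (1/3 + 2/3)"
    unfolding C21_def by (simp only: distrib_right powr_mult powr_add)
  also have "\<dots> = 3" by simp
  finally show ?thesis .
qed

lemma C21_pos: "C21 > 0" unfolding C21_def by (intro add_pos_pos) simp_all

lemma qform: "(q::real) \<ge> 0 \<Longrightarrow> q powr (2/3) = 2 powr (2/3) * ((q/2) powr (1/3))^2"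
proof -
  assume "q \<ge> 0"
  have "q powr (2/3) = (2 * (q/2)) powr (2/3)" by simp
  also have "\<dots> = 2 powr (2/3) * (q/2) powr (2/3)" using \<open>q\<ge>0\<close> powr_mult[of 2 "q/2" "2/3"] by simp
  also have "(q/2) powr (2/3) = ((q/2) powr (1/3))^2" using sq[of "q/2"] \<open>q\<ge>0\<close> by simp
  finally show ?thesis .
qed

lemma lower: "(p::real) \<ge> 0 \<Longrightarrow> q \<ge> 0 \<Longrightarrow> C21 * p powr (1/3) * q powr (2/3) \<le> p + q"
proof -
  assume p: "p\<ge>0" and q: "q\<ge>0"
  define x where "x = p powr (1/3)"
  define z where "z = (q/2) powr (1/3)"
  have px: "p = x^3" using cube[OF p] x_def by simp
  have qz: "q = 2*z^3" using cube[of "q/2"] q z_def by simp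
  have "C21 * p powr (1/3) * q powr (2/3) = (C21 * 2 powr (2/3)) * x * z^2"
    using qform[OF q] x_def z_def by simp
  also have "\<dots> = 3*x*z^2" by (simp add: C21_eq)
  also have "\<dots> \<le> x^3 + 2*z^3" by (rule amgm) (simp_all add: x_def z_def)
  finally show ?thesis using px qz by simp
qed

lemma attain: "(p::real) > 0 \<Longrightarrow> q > 0 \<Longrightarrow> \<exists>t>0. p * t^2 + q / t = C21 * p powr (1/3) * q powr (2/3)"
proof -
  assume p: "p>0" and q: "q>0"
  define x where "x = p powr (1/3)"
  define z where "z = (q/2) powr (1/3)"
  have x0: "x > 0" using p x_def by simp
  have z0: "z > 0" using q z_def by simp
  have px: "p = x^3" using cube[of p] p x_def by simp
  have qz: "q = 2*z^3" using cube[of "q/2"] q z_def by simp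
  have "C21 * p powr (1/3) * q powr (2/3) = (C21 * 2 powr (2/3)) * x * z^2"
    using qform[of q] q x_def z_def by simp
  also have "\<dots> = 3*x*z^2" by (simp add: C21_eq)
  finally have e: "C21 * p powr (1/3) * q powr (2/3) = 3*x*z^2" .
  have "p * (z/x)^2 + q / (z/x) = 3*x*z^2"
    using x0 z0 unfolding px qz by (simp add: field_simps power2_eq_square power3_eq_cube)
  then show ?thesis using e x0 z0 by (intro exI[of _ "z/x"]) simp
qed

lemma pq_rewrite:
  assumes "(\<alpha>::real) > 0" "\<beta> > 0" "a \<ge> 0" "b \<ge> 0"
  shows "(\<alpha>*a^2) powr (1/3) * (\<beta>*b) powr (2/3) = \<alpha> powr (1/3) * \<beta> powr (2/3) * (a*b) powr (2/3)"
proof -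
  have "(a^2) powr (1/3) = a powr (2/3)"
  proof (cases "a = 0")
    case False
    then have "a^2 = a powr 2" using assms by (simp add: powr_realpow)
    then have "(a^2) powr (1/3) = (a powr 2) powr (1/3)" by simp
    also have "\<dots> = a powr (2*(1/3))" by (rule powr_powr)
    finally show ?thesis by simp
  qed simp
  moreover have "(\<alpha>*a^2) powr (1/3) = \<alpha> powr (1/3) * (a^2) powr (1/3)" using assms by (simp add: powr_mult)
  moreover have "(\<beta>*b) powr (2/3) = \<beta> powr (2/3) * b powr (2/3)" using assms by (simp add: powr_mult)
  moreover have "(a*b) powr (2/3) = a powr (2/3) * b powr (2/3)" using assms by (simp add: powr_mult)
  ultimately show ?thesis by simp
qed

lemma l1nn: "l1norm w \<ge> 0" unfolding l1norm_def by (simp add: sum_nonneg)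

theorem mainTheorem3:
  fixes A :: "real^'n2^'n1 \<Rightarrow> real^'m"
    and R :: nat and \<alpha> \<beta> :: real
    and uh u :: "nat \<Rightarrow> real^'n1" and vh v :: "nat \<Rightarrow> real^'n2"
    and \<eta> y :: "real^'m"
  assumes lin: "linear A"
    and R: "R \<ge> 1"
    and pos: "\<alpha> > 0" "\<beta> > 0"
    and y: "y = A (\<Sum>r<R. outer (uh r) (vh r)) + \<eta>"
    and minim: "\<And>u' v'. J A y \<alpha> \<beta> R u v \<le> J A y \<alpha> \<beta> R u' v'"
    and res: "norm (y - A (\<Sum>r<R. outer (u r) (v r))) \<ge> norm \<eta>"
  shows "((\<Sum>r<R. (norm (u r))\<^sup>2)
           \<le> C21 * (\<beta>\<^sup>2 / \<alpha>\<^sup>2) powr (1/3) * (\<Sum>r<R. (norm (uh r) * l1norm (vh r)) powr (2/3)))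
    \<and> ((\<Sum>r<R. l1norm (v r))
           \<le> C21 * (\<alpha> / \<beta>) powr (1/3) * (\<Sum>r<R. (norm (uh r) * l1norm (vh r)) powr (2/3)))
    \<and> ((\<Sum>r<R. (norm (u r) * l1norm (v r)) powr (2/3))
           \<le> (\<Sum>r<R. (norm (uh r) * l1norm (vh r)) powr (2/3)))"
proof -
  define K where "K = (\<Sum>r<R. (norm (uh r) * l1norm (vh r)) powr (2/3))"
  define c where "c = \<alpha> powr (1/3) * \<beta> powr (2/3)"
  have c0: "c > 0" using pos c_def by simp
  have l1scale: "\<And>s w. l1norm (s *\<^sub>R w) = \<bar>s\<bar> * l1norm w"
    unfolding l1norm_def by (simp add: abs_mult sum_distrib_left)
  have l1zero: "\<And>w::real^'n2. l1norm w = 0 \<Longrightarrow> w = 0"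
  proof -
    fix w :: "real^'n2" assume "l1norm w = 0"
    then have "\<forall>j\<in>UNIV. \<bar>w $ j\<bar> = 0" unfolding l1norm_def
      using sum_nonneg_eq_0_iff[of UNIV "\<lambda>j. \<bar>w $ j\<bar>"] by simp
    then show "w = 0" by (simp add: vec_eq_iff)
  qed
  have outer0l: "\<And>w. outer (0::real^'n1) w = 0" unfolding outer_def by (simp add: vec_eq_iff)
  have outer0r: "\<And>w. outer w (0::real^'n2) = 0" unfolding outer_def by (simp add: vec_eq_iff)
  have outerscale: "\<And>t a b. t \<noteq> 0 \<Longrightarrow> outer (t *\<^sub>R a) ((1/t) *\<^sub>R b) = outer a b"
    unfolding outer_def by (simp add: vec_eq_iff)
  \<comment> \<open>per-index rescaled competitors\<close>
  have per: "\<forall>r. \<exists>a' b'. outer a' b' = outer (uh r) (vh r) \<and>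
      \<alpha> * (norm a')^2 + \<beta> * l1norm b' = C21 * c * (norm (uh r) * l1norm (vh r)) powr (2/3)"
  proof
    fix r
    show "\<exists>a' b'. outer a' b' = outer (uh r) (vh r) \<and>
      \<alpha> * (norm a')^2 + \<beta> * l1norm b' = C21 * c * (norm (uh r) * l1norm (vh r)) powr (2/3)"
    proof (cases "norm (uh r) = 0 \<or> l1norm (vh r) = 0")
      case True
      then have "uh r = 0 \<or> vh r = 0" using l1zero by auto
      then have o: "outer (uh r) (vh r) = 0" by (auto simp: outer0l outer0r)
      have p: "norm (uh r) * l1norm (vh r) = 0" using True by auto
      have l0: "l1norm (0::real^'n2) = 0" by (simp add: l1norm_def)
      show ?thesis
        by (intro exI[of _ 0]) (simp add: o p l0 outer0l)
    next
      case False
      let ?a = "norm (uh r)" and ?b = "l1norm (vh r)"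
      have a0: "?a > 0" and b0: "?b > 0" using False l1nn[of "vh r"] by auto
      obtain t where t: "t > 0" "\<alpha> * ?a^2 * t^2 + \<beta> * ?b / t
          = C21 * (\<alpha> * ?a^2) powr (1/3) * (\<beta> * ?b) powr (2/3)"
        using attain[of "\<alpha> * ?a^2" "\<beta> * ?b"] a0 b0 pos by auto
      have e: "C21 * (\<alpha> * ?a^2) powr (1/3) * (\<beta> * ?b) powr (2/3) = C21 * c * (?a * ?b) powr (2/3)"
        using pq_rewrite[of \<alpha> \<beta> ?a ?b] pos a0 b0 c_def by simp
      show ?thesis
      proof (intro exI conjI)
        show "outer (t *\<^sub>R uh r) ((1/t) *\<^sub>R vh r) = outer (uh r) (vh r)" using t by (simp add: outerscale)
        have "\<alpha> * (norm (t *\<^sub>R uh r))^2 + \<beta> * l1norm ((1/t) *\<^sub>R vh r) = \<alpha> * ?a^2 * t^2 + \<beta> * ?b / t"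
          using t(1) by (simp add: l1scale power_mult_distrib mult_ac)
        also have "\<dots> = C21 * (\<alpha> * ?a^2) powr (1/3) * (\<beta> * ?b) powr (2/3)" by (rule t(2))
        finally have "\<alpha> * (norm (t *\<^sub>R uh r))^2 + \<beta> * l1norm ((1/t) *\<^sub>R vh r) = C21 * (\<alpha> * ?a^2) powr (1/3) * (\<beta> * ?b) powr (2/3)" .
        then show "\<alpha> * (norm (t *\<^sub>R uh r))^2 + \<beta> * l1norm ((1/t) *\<^sub>R vh r) = C21 * c * (?a * ?b) powr (2/3)"
          using t e by simp
      qed
    qed
  qed
  then obtain a' b' where ab: "\<And>r. outer (a' r) (b' r) = outer (uh r) (vh r)"
    "\<And>r. \<alpha> * (norm (a' r))^2 + \<beta> * l1norm (b' r) = C21 * c * (norm (uh r) * l1norm (vh r)) powr (2/3)"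
    by metis
  define S where "S = \<alpha> * (\<Sum>r<R. (norm (u r))\<^sup>2) + \<beta> * (\<Sum>r<R. l1norm (v r))"
  have Jab: "J A y \<alpha> \<beta> R a' b' = (norm \<eta>)^2 + C21 * c * K"
  proof -
    have "(\<Sum>r<R. outer (a' r) (b' r)) = (\<Sum>r<R. outer (uh r) (vh r))" using ab(1) by simp
    then have "J A y \<alpha> \<beta> R a' b' = (norm \<eta>)^2 + (\<Sum>r<R. \<alpha> * (norm (a' r))^2 + \<beta> * l1norm (b' r))"
      unfolding J_def y by (simp add: sum.distrib sum_distrib_left)
    also have "\<dots> = (norm \<eta>)^2 + C21 * c * K" using ab(2) by (simp add: K_def sum_distrib_left)
    finally show ?thesis .
  qed
  have Juv: "J A y \<alpha> \<beta> R u v \<ge> (norm \<eta>)^2 + S"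
    unfolding J_def S_def using res by (simp add: power_mono)
  have SK: "S \<le> C21 * c * K" using minim[of a' b'] Jab Juv by simp
  have nu: "(\<Sum>r<R. (norm (u r))\<^sup>2) \<ge> 0" by (simp add: sum_nonneg)
  have nv: "(\<Sum>r<R. l1norm (v r)) \<ge> 0" by (intro sum_nonneg) (simp add: l1nn)
  have g1: "\<alpha> * (\<Sum>r<R. (norm (u r))\<^sup>2) \<le> C21 * c * K" proof -
    have "\<beta> * (\<Sum>r<R. l1norm (v r)) \<ge> 0" using pos nv by simp
    then show ?thesis using SK unfolding S_def by linarith
  qed
  have g2: "\<beta> * (\<Sum>r<R. l1norm (v r)) \<le> C21 * c * K" proof -
    have "\<alpha> * (\<Sum>r<R. (norm (u r))\<^sup>2) \<ge> 0" using pos nu by simp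
    then show ?thesis using SK unfolding S_def by linarith
  qed
  have sq3: "\<And>x::real. x > 0 \<Longrightarrow> (x\<^sup>2) powr (1/3) = x powr (2/3)"
  proof -
    fix x :: real assume "x > 0"
    then have "x^2 = x powr 2" by (simp add: powr_realpow)
    then have "(x^2) powr (1/3) = (x powr 2) powr (1/3)" by simp
    also have "\<dots> = x powr (2*(1/3))" by (rule powr_powr)
    finally show "(x\<^sup>2) powr (1/3) = x powr (2/3)" by simp
  qed
  have ha: "\<alpha> powr (1/3) * \<alpha> powr (2/3) = \<alpha>"
  proof -
    have "\<alpha> powr (1/3) * \<alpha> powr (2/3) = \<alpha> powr (1/3 + 2/3)" by (simp only: powr_add)
    then show ?thesis using pos by simp
  qed
  have hb: "\<beta> powr (2/3) * \<beta> powr (1/3) = \<beta>"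
  proof -
    have "\<beta> powr (2/3) * \<beta> powr (1/3) = \<beta> powr (2/3 + 1/3)" by (simp only: powr_add)
    then show ?thesis using pos by simp
  qed
  have e1: "c / \<alpha> = (\<beta>\<^sup>2 / \<alpha>\<^sup>2) powr (1/3)"
  proof -
    have "(\<beta>\<^sup>2 / \<alpha>\<^sup>2) powr (1/3) = (\<beta>\<^sup>2) powr (1/3) / (\<alpha>\<^sup>2) powr (1/3)"
      using pos by (simp add: powr_divide)
    also have "\<dots> = \<beta> powr (2/3) / \<alpha> powr (2/3)" using pos sq3 by simp
    also have "\<dots> = c / \<alpha>"
    proof -
      have "c / \<alpha> = (\<alpha> powr (1/3) * \<beta> powr (2/3)) / (\<alpha> powr (1/3) * \<alpha> powr (2/3))"
        unfolding c_def ha ..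
      also have "\<dots> = \<beta> powr (2/3) / \<alpha> powr (2/3)" using pos by simp
      finally show ?thesis by simp
    qed
    finally show ?thesis by simp
  qed
  have e2: "c / \<beta> = (\<alpha> / \<beta>) powr (1/3)"
  proof -
    have "(\<alpha> / \<beta>) powr (1/3) = \<alpha> powr (1/3) / \<beta> powr (1/3)"
      using pos by (simp add: powr_divide)
    also have "\<dots> = c / \<beta>"
    proof -
      have "c / \<beta> = (\<alpha> powr (1/3) * \<beta> powr (2/3)) / (\<beta> powr (2/3) * \<beta> powr (1/3))"
        unfolding c_def hb ..
      also have "\<dots> = \<alpha> powr (1/3) / \<beta> powr (1/3)" using pos by simp
      finally show ?thesis by simp
    qed
    finally show ?thesis by simp
  qed
  have r1: "(\<Sum>r<R. (norm (u r))\<^sup>2) \<le> C21 * (\<beta>\<^sup>2 / \<alpha>\<^sup>2) powr (1/3) * K"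
  proof -
    have "(\<Sum>r<R. (norm (u r))\<^sup>2) \<le> C21 * c * K / \<alpha>" using g1 pos by (simp add: field_simps)
    also have "\<dots> = C21 * (c / \<alpha>) * K" by simp
    finally show ?thesis using e1 by simp
  qed
  have r2: "(\<Sum>r<R. l1norm (v r)) \<le> C21 * (\<alpha> / \<beta>) powr (1/3) * K"
  proof -
    have "(\<Sum>r<R. l1norm (v r)) \<le> C21 * c * K / \<beta>" using g2 pos by (simp add: field_simps)
    also have "\<dots> = C21 * (c / \<beta>) * K" by simp
    finally show ?thesis using e2 by simp
  qed
  have low: "\<And>r. C21 * c * (norm (u r) * l1norm (v r)) powr (2/3) \<le> \<alpha> * (norm (u r))^2 + \<beta> * l1norm (v r)"
  proof -
    fix r
    have "C21 * c * (norm (u r) * l1norm (v r)) powr (2/3)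
        = C21 * (\<alpha> * (norm (u r))^2) powr (1/3) * (\<beta> * l1norm (v r)) powr (2/3)"
      using pq_rewrite[of \<alpha> \<beta> "norm (u r)" "l1norm (v r)", OF pos norm_ge_zero l1nn] c_def by (simp add: mult_ac)
    also have "\<dots> \<le> \<alpha> * (norm (u r))^2 + \<beta> * l1norm (v r)"
      by (rule lower) (use pos l1nn[of "v r"] in auto)
    finally show "C21 * c * (norm (u r) * l1norm (v r)) powr (2/3) \<le> \<alpha> * (norm (u r))^2 + \<beta> * l1norm (v r)" .
  qed
  have "C21 * c * (\<Sum>r<R. (norm (u r) * l1norm (v r)) powr (2/3)) \<le> S"
  proof -
    have "C21 * c * (\<Sum>r<R. (norm (u r) * l1norm (v r)) powr (2/3))
        = (\<Sum>r<R. C21 * c * (norm (u r) * l1norm (v r)) powr (2/3))" by (simp add: sum_distrib_left)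
    also have "\<dots> \<le> (\<Sum>r<R. \<alpha> * (norm (u r))^2 + \<beta> * l1norm (v r))" by (rule sum_mono) (rule low)
    also have "\<dots> = S" unfolding S_def by (simp add: sum.distrib sum_distrib_left)
    finally show ?thesis .
  qed
  then have "C21 * c * (\<Sum>r<R. (norm (u r) * l1norm (v r)) powr (2/3)) \<le> C21 * c * K" using SK by simp
  then have r3: "(\<Sum>r<R. (norm (u r) * l1norm (v r)) powr (2/3)) \<le> K"
    using C21_pos c0 by (simp add: mult_le_cancel_left_pos)
  show ?thesis using r1 r2 r3 K_def by simp
qed

end
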